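(* Let $(X,d)$ be a finite metric space with points $x_1,\ldots,x_n$, where $n\ge 2$. For $p\ge 0$ let $D_p=\left[d(x_i,x_j)^p\right]_{1\le i,j\le n}$ be the $p$-distance matrix (with the convention that the diagonal entries are $0$ for every $p\ge 0$, including $p=0$). Assume that every row of $D_1$ is a permutation of the first row of $D_1$. Let $H=\{\alpha\in\mathbb{R}^n:\langle \alpha,\mathbb{1}\rangle=0\}$, where $\mathbb{1}$ is the all-ones vector. Then: (1) $\mathfrak{q}(X,d)=\inf\{p\ge 0:\det(D_p)=0\}$. (2) If $q:=\mathfrak{q}(X,d)<\infty$, then for $\mathbf{u}\in\mathbb{R}^n$ we have ($\mathbf{u}\in H$ and $\mathbf{u}^T D_q\mathbf{u}=0$) if and only if $D_q\mathbf{u}=\mathbf{0}$.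
   Context: For $p\ge 0$, a metric space $(X,d)$ has generalized roundness exponent $p$ if for all $m\in\mathbb{N}$ and all points $a_1,\ldots,a_m,b_1,\ldots,b_m\in X$, $\sum_{1\le k<l\le m}\{d(a_k,a_l)^p+d(b_k,b_l)^p\}\le \sum_{1\le j,i\le m} d(a_j,b_i)^p$. The generalized roundness $\mathfrak{q}(X,d)$ is the supremum of all generalized roundness exponents of $(X,d)$. Equivalently, $p$ is a generalized roundness exponent iff $(X,d)$ has $p$-negative type, i.e. $\sum_{i,j} d(x_i,x_j)^p\eta_i\eta_j\le 0$ for all finite $\{x_1,\dots,x_m\}\subseteq X$ and reals $\eta_i$ with $\sum\eta_i=0$. *)

theory Defs
  imports "HOL-Analysis.Analysis"
begin

definition metric_on :: "'a set \<Rightarrow> ('a \<Rightarrow> 'a \<Rightarrow> real) \<Rightarrow> bool" where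
  "metric_on X d \<longleftrightarrow>
     (\<forall>x\<in>X. \<forall>y\<in>X. d x y = 0 \<longleftrightarrow> x = y) \<and>
     (\<forall>x\<in>X. \<forall>y\<in>X. d x y = d y x) \<and>
     (\<forall>x\<in>X. \<forall>y\<in>X. \<forall>z\<in>X. d x z \<le> d x y + d y z)"

text \<open>Generalized roundness exponent (powers written with powr, so that 0 powr p = 0,
  i.e. d(x,x)^p = 0 for all p, including p = 0). Indices 0..m-1 instead of 1..m.\<close>
definition gr_exponent :: "'a set \<Rightarrow> ('a \<Rightarrow> 'a \<Rightarrow> real) \<Rightarrow> real \<Rightarrow> bool" where
  "gr_exponent X d p \<longleftrightarrow> p \<ge> 0 \<and>
     (\<forall>(m::nat) (a::nat \<Rightarrow> 'a) (b::nat \<Rightarrow> 'a).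
        (\<forall>k<m. a k \<in> X) \<longrightarrow> (\<forall>k<m. b k \<in> X) \<longrightarrow>
        (\<Sum>(k,l)\<in>{(k,l). k < l \<and> l < m}. d (a k) (a l) powr p + d (b k) (b l) powr p)
          \<le> (\<Sum>j<m. \<Sum>i<m. d (a j) (b i) powr p))"

definition gen_roundness :: "'a set \<Rightarrow> ('a \<Rightarrow> 'a \<Rightarrow> real) \<Rightarrow> ereal" where
  "gen_roundness X d = Sup {ereal p | p. gr_exponent X d p}"

definition dist_matrix :: "('n::finite \<Rightarrow> 'n \<Rightarrow> real) \<Rightarrow> real \<Rightarrow> real^'n^'n" where
  "dist_matrix d p = (\<chi> i j. d i j powr p)"

end

theory Submission
  imports Defs
begin


definition qf :: "('n::finite \<Rightarrow> 'n \<Rightarrow> real) \<Rightarrow> ('n \<Rightarrow> real) \<Rightarrow> real" where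
  "qf A v = (\<Sum>i\<in>UNIV. \<Sum>j\<in>UNIV. v i * v j * A i j)"

definition psd :: "('n::finite \<Rightarrow> 'n \<Rightarrow> real) \<Rightarrow> bool" where
  "psd A \<longleftrightarrow> (\<forall>v. 0 \<le> qf A v)"

definition cnd :: "('n::finite \<Rightarrow> 'n \<Rightarrow> real) \<Rightarrow> bool" where
  "cnd A \<longleftrightarrow> (\<forall>v. sum v UNIV = 0 \<longrightarrow> qf A v \<le> 0)"

lemma qf_add: "qf (\<lambda>i j. A i j + B i j) v = qf A v + qf B v"
  by (simp add: qf_def distrib_left sum.distrib)

lemma qf_diff: "qf (\<lambda>i j. A i j - B i j) v = qf A v - qf B v"
  by (simp add: qf_def right_diff_distrib sum_subtractf)

lemma qf_cmult: "qf (\<lambda>i j. c * A i j) v = c * qf A v"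
  by (simp add: qf_def sum_distrib_left algebra_simps)

lemma qf_rank1: "qf (\<lambda>i j. x i * y j) v = (\<Sum>i\<in>UNIV. v i * x i) * (\<Sum>j\<in>UNIV. v j * y j)"
  unfolding qf_def sum_product by (intro sum.cong refl) (simp add: algebra_simps)

lemma qf_const1: "qf (\<lambda>i j. 1) v = (sum v UNIV)^2"
  unfolding qf_def power2_eq_square sum_product by simp

lemma qf_scale: "qf (\<lambda>i j. f i * A i j * f j) v = qf A (\<lambda>i. v i * f i)"
  unfolding qf_def by (intro sum.cong refl) (simp add: algebra_simps)

lemma qf_update:
  "qf B (\<lambda>i. v i + t * (if i = a then 1 else 0)) =
     qf B v + t * (\<Sum>j\<in>UNIV. v j * B a j) + t * (\<Sum>i\<in>UNIV. v i * B i a) + t^2 * B a a"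
proof -
  have "qf B (\<lambda>i. v i + t * (if i = a then 1 else 0)) =
     (\<Sum>i\<in>UNIV. \<Sum>j\<in>UNIV. v i * v j * B i j + t * ((if i = a then 1 else 0) * v j * B i j)
        + t * (v i * (if j = a then 1 else 0) * B i j)
        + t^2 * ((if i = a then 1 else 0) * (if j = a then 1 else 0) * B i j))"
    unfolding qf_def by (intro sum.cong refl) (simp add: algebra_simps power2_eq_square)
  also have "\<dots> = qf B v + t * (\<Sum>j\<in>UNIV. v j * B a j) + t * (\<Sum>i\<in>UNIV. v i * B i a) + t^2 * B a a"
  proof -
    have e1: "(\<Sum>i\<in>UNIV. \<Sum>j\<in>UNIV. (if i = a then 1 else 0) * v j * B i j) = (\<Sum>j\<in>UNIV. v j * B a j)"
      by (subst sum.swap) (simp add: if_distrib[of "\<lambda>x. x * _"] cong: if_cong)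
    have e2: "(\<Sum>i\<in>UNIV. \<Sum>j\<in>UNIV. v i * (if j = a then 1 else 0) * B i j) = (\<Sum>i\<in>UNIV. v i * B i a)"
      by (simp add: if_distrib[of "\<lambda>x. x * _"] if_distrib[of "\<lambda>x. _ * x"] cong: if_cong)
    have e3: "(\<Sum>i\<in>UNIV. \<Sum>j\<in>UNIV. (if i = a then 1 else 0) * (if j = a then 1 else 0) * B i j) = B a a"
      by (subst sum.swap) (simp add: if_distrib[of "\<lambda>x. x * _"] cong: if_cong)
    show ?thesis
      by (simp add: sum.distrib qf_def sum_distrib_left[symmetric] e1 e2 e3)
  qed
  finally show ?thesis .
qed

lemma qf_delta: "qf B (\<lambda>i. if i = a then 1 else 0) = B a a"
  using qf_update[of B "\<lambda>_. 0" 1 a] by (simp add: qf_def)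

lemma psd_diag: "psd B \<Longrightarrow> 0 \<le> B a a"
  using qf_delta[of B a] unfolding psd_def by metis

lemma psd_zero_row:
  assumes "psd B" "\<And>i j. B i j = B j i" "B a a = 0"
  shows "B a j = 0"
proof (rule ccontr)
  assume ne: "B a j \<noteq> 0"
  define t where "t = - (B j j + 1) / (2 * B a j)"
  have "0 \<le> qf B (\<lambda>i. (if i = j then 1 else 0) + t * (if i = a then 1 else 0))"
    using assms(1) by (simp add: psd_def)
  also have "\<dots> = B j j + t * B a j + t * B j a + t^2 * B a a"
    by (subst qf_update) (simp add: qf_delta if_distrib[of "\<lambda>x. x * _"] cong: if_cong)
  also have "\<dots> = B j j + 2 * t * B a j" using assms(2,3) by (simp add: assms(2)[of j a])
  also have "\<dots> = -1" using ne by (simp add: t_def field_simps)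
  finally show False by simp
qed

lemma schur_aux:
  assumes A: "psd A" and F: "finite F"
  shows "\<forall>B. (\<forall>i j. B i j = B j i) \<longrightarrow> psd B \<longrightarrow> (\<forall>i j. B i j \<noteq> 0 \<longrightarrow> i \<in> F)
           \<longrightarrow> psd (\<lambda>i j. A i j * B i j)"
  using F
proof (induction F rule: finite_induct)
  case empty
  show ?case
  proof (intro allI impI)
    fix B :: "'a \<Rightarrow> 'a \<Rightarrow> real" assume "\<forall>i j. B i j \<noteq> 0 \<longrightarrow> i \<in> {}"
    then have "\<And>i j. B i j = 0" by blast
    then show "psd (\<lambda>i j. A i j * B i j)" by (simp add: psd_def qf_def)
  qed
next
  case (insert a F)
  show ?case
  proof (intro allI impI)
    fix B :: "'a \<Rightarrow> 'a \<Rightarrow> real"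
    assume sym: "\<forall>i j. B i j = B j i" and pB: "psd B" and supp: "\<forall>i j. B i j \<noteq> 0 \<longrightarrow> i \<in> insert a F"
    show "psd (\<lambda>i j. A i j * B i j)"
    proof (cases "B a a = 0")
      case True
      have "\<And>j. B a j = 0" using psd_zero_row[OF pB _ True] sym by blast
      then have "\<forall>i j. B i j \<noteq> 0 \<longrightarrow> i \<in> F" using supp by auto
      then show ?thesis using insert.IH sym pB by blast
    next
      case False
      then have pos: "B a a > 0" using psd_diag[OF pB, of a] by simp
      define B' where "B' = (\<lambda>i j. B i j - B i a * B j a / B a a)"
      have sym': "\<forall>i j. B' i j = B' j i"
      proof (intro allI)
        fix i j show "B' i j = B' j i" unfolding B'_def using sym[rule_format, of i j] by (simp add: mult.commute)
      qed
      have supp': "\<forall>i j. B' i j \<noteq> 0 \<longrightarrow> i \<in> F"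
      proof (intro allI impI)
        fix i j assume ne: "B' i j \<noteq> 0"
        show "i \<in> F"
        proof (cases "i = a")
          case True then show ?thesis using ne False sym[rule_format, of j a] by (simp add: B'_def)
        next
          case ia: False
          have "i \<in> insert a F"
          proof (rule ccontr)
            assume "i \<notin> insert a F"
            then have "B i j = 0" "B i a = 0" using supp by blast+
            then show False using ne by (simp add: B'_def)
          qed
          then show ?thesis using ia by simp
        qed
      qed
      have pB': "psd B'"
        unfolding psd_def
      proof
        fix v
        define L where "L = (\<Sum>j\<in>UNIV. v j * B a j)"
        have L2: "(\<Sum>i\<in>UNIV. v i * B i a) = L" unfolding L_def using sym by simp
        have "0 \<le> qf B (\<lambda>i. v i + (- L / B a a) * (if i = a then 1 else 0))"
          using pB by (simp add: psd_def)
        also have "\<dots> = qf B v - L * L / B a a"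
          by (subst qf_update, unfold L_def[symmetric] L2) (use False in \<open>simp add: power2_eq_square field_simps\<close>)
        also have "\<dots> = qf B' v"
        proof -
          have "qf B' v = qf B v - qf (\<lambda>i j. (B i a / B a a) * B j a) v"
            unfolding B'_def by (subst qf_diff[symmetric]) simp
          also have "qf (\<lambda>i j. (B i a / B a a) * B j a) v = L * L / B a a"
          proof -
            have "(\<Sum>i\<in>UNIV. v i * (B i a / B a a)) = (\<Sum>i\<in>UNIV. v i * B i a) / B a a"
              by (simp add: sum_divide_distrib)
            then show ?thesis by (subst qf_rank1) (simp add: L2)
          qed
          finally show ?thesis by simp
        qed
        finally show "0 \<le> qf B' v" .
      qed
      have IH: "psd (\<lambda>i j. A i j * B' i j)" using insert.IH sym' pB' supp' by blast
      have R: "psd (\<lambda>i j. A i j * (B i a * B j a / B a a))"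
        unfolding psd_def
      proof
        fix v
        have e: "(\<lambda>i j. A i j * (B i a * B j a / B a a)) = (\<lambda>i j. (1 / B a a) * (B i a * A i j * B j a))"
          by (simp add: fun_eq_iff)
        have "qf (\<lambda>i j. A i j * (B i a * B j a / B a a)) v = (1 / B a a) * qf A (\<lambda>i. v i * B i a)"
          unfolding e qf_cmult qf_scale ..
        also have "\<dots> \<ge> 0" using A pos by (simp add: psd_def)
        finally show "0 \<le> qf (\<lambda>i j. A i j * (B i a * B j a / B a a)) v" .
      qed
      have eq: "(\<lambda>i j. A i j * B i j) = (\<lambda>i j. A i j * B' i j + A i j * (B i a * B j a / B a a))"
        by (simp add: B'_def algebra_simps)
      show ?thesis unfolding eq psd_def qf_add using IH R by (simp add: psd_def add_nonneg_nonneg)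
    qed
  qed
qed

lemma schur:
  fixes A B :: "'n::finite \<Rightarrow> 'n \<Rightarrow> real"
  assumes "psd A" "psd B" "\<And>i j. B i j = B j i"
  shows "psd (\<lambda>i j. A i j * B i j)"
  using schur_aux[OF assms(1), of UNIV] assms by simp

lemma psd_hpower:
  fixes G :: "'n::finite \<Rightarrow> 'n \<Rightarrow> real"
  assumes "psd G" "\<And>i j. G i j = G j i"
  shows "psd (\<lambda>i j. G i j ^ m)"
proof (induction m)
  case 0 then show ?case by (simp add: psd_def qf_const1)
next
  case (Suc m)
  then show ?case using schur[OF Suc assms] by (simp add: mult.commute)
qed

lemma psd_hexp:
  fixes G :: "'n::finite \<Rightarrow> 'n \<Rightarrow> real"
  assumes "psd G" "\<And>i j. G i j = G j i"
  shows "psd (\<lambda>i j. exp (G i j))"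
  unfolding psd_def
proof
  fix v
  have S: "(\<lambda>n. qf (\<lambda>i j. G i j ^ n) v / fact n) sums qf (\<lambda>i j. exp (G i j)) v"
  proof -
    have "(\<lambda>n. \<Sum>i\<in>UNIV. \<Sum>j\<in>UNIV. v i * v j * (G i j ^ n /\<^sub>R fact n)) sums
          (\<Sum>i\<in>UNIV. \<Sum>j\<in>UNIV. v i * v j * exp (G i j))"
      by (intro sums_sum sums_mult exp_converges)
    moreover have "\<And>n. (\<Sum>i\<in>UNIV. \<Sum>j\<in>UNIV. v i * v j * (G i j ^ n /\<^sub>R fact n)) = qf (\<lambda>i j. G i j ^ n) v / fact n"
      unfolding qf_def sum_divide_distrib by (intro sum.cong refl) (simp add: divide_inverse)
    moreover have "(\<Sum>i\<in>UNIV. \<Sum>j\<in>UNIV. v i * v j * exp (G i j)) = qf (\<lambda>i j. exp (G i j)) v"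
      by (simp add: qf_def)
    ultimately show ?thesis by simp
  qed
  have P: "\<And>n. 0 \<le> qf (\<lambda>i j. G i j ^ n) v / fact n"
    using psd_hpower[OF assms] by (simp add: psd_def)
  show "0 \<le> qf (\<lambda>i j. exp (G i j)) v"
    by (rule sums_le[OF P sums_zero S])
qed


lemma psd_scale: "psd A \<Longrightarrow> psd (\<lambda>i j. f i * A i j * f j)"
  by (simp add: psd_def qf_scale)

lemma schoenberg:
  fixes K :: "'n::finite \<Rightarrow> 'n \<Rightarrow> real"
  assumes sym: "\<And>i j. K i j = K j i" and diag: "\<And>i. K i i = 0" and cK: "cnd K" and s: "s \<ge> 0"
  shows "psd (\<lambda>i j. exp (- (s * K i j)))"
proof -
  define a where "a = (undefined :: 'n)"
  define G where "G = (\<lambda>i j. K i a + K a j - K i j)"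
  have Gsym: "\<And>i j. G i j = G j i" unfolding G_def by (metis sym add.commute)
  have pG: "psd G"
    unfolding psd_def
  proof
    fix v :: "'n \<Rightarrow> real"
    define S where "S = sum v UNIV"
    define L where "L = (\<Sum>j\<in>UNIV. v j * K a j)"
    have L2: "(\<Sum>i\<in>UNIV. v i * K i a) = L" unfolding L_def by (intro sum.cong refl) (metis sym)
    define w where "w = (\<lambda>i. v i + (- S) * (if i = a then 1 else 0))"
    have sw: "sum w UNIV = 0" unfolding w_def S_def by (simp add: sum.distrib sum_subtractf if_distrib[of "\<lambda>x. _ * x"] cong: if_cong)
    have "qf K w = qf K v - S * L - S * L"
      unfolding w_def by (subst qf_update) (simp add: L2 L_def[symmetric] diag)
    moreover have "qf G v = S * L + S * L - qf K v"
    proof -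
      have "qf G v = qf (\<lambda>i j. K i a * 1) v + qf (\<lambda>i j. 1 * K a j) v - qf K v"
        unfolding G_def by (simp add: qf_add[symmetric] qf_diff[symmetric])
      also have "\<dots> = S * L + S * L - qf K v"
        unfolding qf_rank1 by (simp add: L2 L_def[symmetric] S_def)
      finally show ?thesis .
    qed
    moreover have "qf K w \<le> 0" using cK sw by (simp add: cnd_def)
    ultimately show "0 \<le> qf G v" by simp
  qed
  have "psd (\<lambda>i j. s * G i j)" using pG s by (simp add: psd_def qf_cmult)
  then have "psd (\<lambda>i j. exp (s * G i j))" by (rule psd_hexp) (simp add: Gsym)
  then have "psd (\<lambda>i j. exp (- (s * K i a)) * exp (s * G i j) * exp (- (s * K j a)))"
    by (rule psd_scale)
  moreover have "(\<lambda>i j. exp (- (s * K i a)) * exp (s * G i j) * exp (- (s * K j a))) = (\<lambda>i j. exp (- (s * K i j)))"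
  proof (intro ext)
    fix i j
    show "exp (- (s * K i a)) * exp (s * G i j) * exp (- (s * K j a)) = exp (- (s * K i j))"
      unfolding G_def using sym[of j a] by (simp add: exp_add[symmetric] algebra_simps)
  qed
  ultimately show ?thesis by simp
qed


definition phi :: "real \<Rightarrow> real \<Rightarrow> real" where
  "phi a r = (1 - exp (- r)) * r powr (- a - 1)"

lemma phi_integrable:
  assumes a: "0 < a" "a < 1"
  shows "phi a absolutely_integrable_on {0<..}"
proof -
  define g where "g = (\<lambda>x::real. if x \<le> 1 then x powr (- a) else x powr (- a - 1))"
  have i1: "(g has_integral (1 powr (- a + 1) / (- a + 1))) {0..1}"
    using has_integral_powr_from_0[of "- a" 1] a
    by (rule_tac has_integral_eq[rotated]) (auto simp: g_def)
  have i2: "(g has_integral (- (1 powr (- a - 1 + 1)) / (- a - 1 + 1))) {1..}"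
  proof (rule has_integral_eq[rotated])
    show "((\<lambda>x. x powr (- a - 1)) has_integral (- (1 powr (- a - 1 + 1)) / (- a - 1 + 1))) {1..}"
      using has_integral_powr_to_inf[of "- a - 1" 1] a by simp
    fix x :: real assume "x \<in> {1..}"
    then show "x powr (- a - 1) = g x" by (cases "x = 1") (auto simp: g_def)
  qed
  have "(g has_integral (1 powr (- a + 1) / (- a + 1) + - (1 powr (- a - 1 + 1)) / (- a - 1 + 1))) ({0..1} \<union> {1..})"
    by (rule has_integral_Un[OF i1 i2]) (auto intro: negligible_subset[of "{1}"])
  moreover have "{0..1} \<union> {1..} = {0::real..}" by auto
  ultimately have "g integrable_on {0..}" by (auto simp: integrable_on_def)
  then have gi: "g integrable_on {0<..}"
    by (rule integrable_spike_set) (auto intro: negligible_subset[of "{0}"])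
  have cont: "continuous_on {0<..} (phi a)"
    unfolding phi_def by (intro continuous_intros) auto
  have bound: "\<bar>phi a x\<bar> \<le> g x" if x: "x \<in> {0<..}" for x
  proof -
    have x0: "x > 0" using x by simp
    have e1: "0 \<le> 1 - exp (- x)" using x0 by simp
    have pnn: "0 \<le> x powr (- a - 1)" by simp
    show ?thesis
    proof (cases "x \<le> 1")
      case True
      have "1 - exp (- x) \<le> x" using exp_ge_add_one_self[of "- x"] by simp
      then have "phi a x \<le> x * x powr (- a - 1)"
        unfolding phi_def by (intro mult_right_mono pnn)
      also have "x * x powr (- a - 1) = x powr (- a)"
        using x0 by (simp add: powr_add[symmetric] powr_mult_base)
      finally show ?thesis using e1 True by (simp add: g_def phi_def abs_of_nonneg)
    next
      case False
      have "phi a x \<le> 1 * x powr (- a - 1)"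
        unfolding phi_def by (intro mult_right_mono pnn) simp
      then show ?thesis using e1 False by (simp add: g_def phi_def abs_of_nonneg)
    qed
  qed
  have "phi a integrable_on {0<..}"
    by (rule measurable_bounded_by_integrable_imp_integrable_real[OF
          continuous_imp_measurable_on_sets_lebesgue[OF cont] gi bound]) auto
  then show ?thesis
    by (rule nonnegative_absolutely_integrable_1) (auto simp: phi_def)
qed

lemma image_mult_greaterThan0:
  assumes "t > (0::real)" shows "(\<lambda>x. t * x) ` {0<..} = {0<..}"
proof (intro set_eqI iffI)
  fix y assume "y \<in> (\<lambda>x. t * x) ` {0<..}" then show "y \<in> {0<..}" using assms by auto
next
  fix y :: real assume "y \<in> {0<..}"
  then have "y = t * (y / t)" "y / t \<in> {0<..}" using assms by auto
  then show "y \<in> (\<lambda>x. t * x) ` {0<..}" by blast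
qed

lemma phi_scale:
  assumes a: "0 < a" "a < 1" and t: "t \<ge> 0"
  shows "((\<lambda>s. (1 - exp (- (t * s))) * s powr (- a - 1)) has_integral
           (t powr a * integral {0<..} (phi a))) {0<..}"
proof (cases "t = 0")
  case True
  then show ?thesis by (simp add: has_integral_0)
next
  case False
  then have tp: "t > 0" using t by simp
  have cv: "(\<lambda>x. \<bar>t\<bar> * phi a (t * x)) absolutely_integrable_on {0<..} \<and>
           integral {0<..} (\<lambda>x. \<bar>t\<bar> * phi a (t * x)) = integral {0<..} (phi a)"
  proof (subst has_absolute_integral_change_of_variables_1'[of "{0<..}" "\<lambda>x. t * x" "\<lambda>_. t"])
    show "{0::real<..} \<in> sets lebesgue" by auto
    show "((*) t has_field_derivative t) (at x within {0<..})" for x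
      by (auto intro!: derivative_eq_intros)
    show "inj_on ((*) t) {0<..}" using tp by (auto simp: inj_on_def)
    show "phi a absolutely_integrable_on (*) t ` {0<..} \<and>
          integral ((*) t ` {0<..}) (phi a) = integral {0<..} (phi a)"
      using phi_integrable[OF a] image_mult_greaterThan0[OF tp] by simp
  qed
  then have "(\<lambda>x. \<bar>t\<bar> * phi a (t * x)) integrable_on {0<..}"
    using set_lebesgue_integral_eq_integral(1) by blast
  then have hi: "((\<lambda>x. \<bar>t\<bar> * phi a (t * x)) has_integral integral {0<..} (phi a)) {0<..}"
    using cv integrable_integral by metis
  have "((\<lambda>x. t powr a * (\<bar>t\<bar> * phi a (t * x))) has_integral (t powr a * integral {0<..} (phi a))) {0<..}"
    using has_integral_cmul[OF hi, of "t powr a"] by simp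
  then show ?thesis
  proof (rule has_integral_eq[rotated])
    fix x :: real assume "x \<in> {0<..}"
    then have x: "x > 0" by simp
    have p: "(t * x) powr (- a - 1) = t powr (- a - 1) * x powr (- a - 1)"
      using x tp by (simp add: powr_mult)
    have q: "t powr a * (t * t powr (- a - 1)) = 1"
      using tp by (simp add: powr_mult_base powr_add[symmetric])
    have "t powr a * (\<bar>t\<bar> * phi a (t * x)) = (t powr a * (t * t powr (- a - 1))) * ((1 - exp (- (t * x))) * x powr (- a - 1))"
      using tp by (simp add: phi_def p algebra_simps)
    also have "\<dots> = (1 - exp (- (t * x))) * x powr (- a - 1)" by (simp add: q)
    finally show "t powr a * (\<bar>t\<bar> * phi a (t * x)) = (1 - exp (- (t * x))) * x powr (- a - 1)" .
  qed
qed


lemma exp_neg_le_inv: "x > 0 \<Longrightarrow> exp (- x) \<le> 1 / (x::real)"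
proof -
  assume x: "x > 0"
  have "x \<le> exp x" using exp_ge_add_one_self[of x] by linarith
  then show ?thesis using x by (simp add: exp_minus field_simps)
qed

lemma qf_exp_large:
  fixes K :: "'n::finite \<Rightarrow> 'n \<Rightarrow> real" and u :: "'n \<Rightarrow> real"
  assumes diag: "\<And>i. K i i = 0" and pos: "\<And>i j. i \<noteq> j \<Longrightarrow> K i j > 0"
    and T: "T = (\<Sum>i\<in>UNIV. \<Sum>j\<in>UNIV. if i = j then 0 else \<bar>u i * u j\<bar> / K i j)"
    and s: "s > 0"
  shows "qf (\<lambda>i j. exp (- (s * K i j))) u \<ge> (\<Sum>i\<in>UNIV. (u i)^2) - T / s"
proof -
  have split: "qf (\<lambda>i j. exp (- (s * K i j))) u =
     (\<Sum>i\<in>UNIV. (u i)^2) + (\<Sum>i\<in>UNIV. \<Sum>j\<in>UNIV. if i = j then 0 else u i * u j * exp (- (s * K i j)))"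
  proof -
    have "qf (\<lambda>i j. exp (- (s * K i j))) u =
       (\<Sum>i\<in>UNIV. \<Sum>j\<in>UNIV. (if i = j then (u i)^2 else 0) + (if i = j then 0 else u i * u j * exp (- (s * K i j))))"
      unfolding qf_def by (intro sum.cong refl) (auto simp: diag power2_eq_square)
    also have "\<dots> = (\<Sum>i\<in>UNIV. (u i)^2) + (\<Sum>i\<in>UNIV. \<Sum>j\<in>UNIV. if i = j then 0 else u i * u j * exp (- (s * K i j)))"
      by (simp add: sum.distrib)
    finally show ?thesis .
  qed
  have "- (\<Sum>i\<in>UNIV. \<Sum>j\<in>UNIV. if i = j then 0 else u i * u j * exp (- (s * K i j))) \<le>
        (\<Sum>i\<in>UNIV. \<Sum>j\<in>UNIV. if i = j then 0 else \<bar>u i * u j\<bar> / K i j / s)"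
    unfolding sum_negf[symmetric]
  proof (intro sum_mono)
    fix i j
    show "- (if i = j then 0 else u i * u j * exp (- (s * K i j))) \<le> (if i = j then 0 else \<bar>u i * u j\<bar> / K i j / s)"
    proof (cases "i = j")
      case False
      have Kp: "K i j > 0" using pos False by simp
      have "- (u i * u j * exp (- (s * K i j))) \<le> \<bar>u i * u j\<bar> * exp (- (s * K i j))"
        by (metis abs_ge_minus_self abs_mult_pos exp_ge_zero mult_minus_left)
      also have "\<dots> \<le> \<bar>u i * u j\<bar> * (1 / (s * K i j))"
        using exp_neg_le_inv[of "s * K i j"] Kp s by (intro mult_left_mono) auto
      finally show ?thesis using False by (simp add: field_simps)
    qed simp
  qed
  also have "\<dots> = T / s" unfolding T sum_divide_distrib by (intro sum.cong refl) auto
  finally show ?thesis using split by simp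
qed

lemma strict_power:
  fixes K :: "'n::finite \<Rightarrow> 'n \<Rightarrow> real"
  assumes sym: "\<And>i j. K i j = K j i" and diag: "\<And>i. K i i = 0"
    and pos: "\<And>i j. i \<noteq> j \<Longrightarrow> K i j > 0" and cK: "cnd K"
    and a: "0 < a" "a < 1" and u: "sum u UNIV = 0" and nz: "u k \<noteq> 0"
  shows "qf (\<lambda>i j. K i j powr a) u < 0"
proof -
  define C where "C = integral {0<..} (phi a)"
  define Q where "Q = qf (\<lambda>i j. K i j powr a) u"
  define psi where "psi = (\<lambda>s. qf (\<lambda>i j. exp (- (s * K i j))) u * s powr (- a - 1))"
  have Kn: "K i j \<ge> 0" for i j using pos[of i j] diag[of i] by (cases "i = j") auto
  have h1: "((\<lambda>s. \<Sum>i\<in>UNIV. \<Sum>j\<in>UNIV. u i * u j * ((1 - exp (- (K i j * s))) * s powr (- a - 1)))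
             has_integral (\<Sum>i\<in>UNIV. \<Sum>j\<in>UNIV. u i * u j * (K i j powr a * C))) {0<..}"
    unfolding C_def using Kn
    by (intro has_integral_sum finite_UNIV has_integral_mult_right phi_scale a) auto
  have eqC: "(\<Sum>i\<in>UNIV. \<Sum>j\<in>UNIV. u i * u j * (K i j powr a * C)) = C * Q"
    unfolding Q_def qf_def sum_distrib_left by (intro sum.cong refl) (simp add: algebra_simps)
  have sq0: "(\<Sum>i\<in>UNIV. \<Sum>j\<in>UNIV. u i * u j) = 0"
    using u by (simp add: sum_product[symmetric])
  have eqpsi: "(\<Sum>i\<in>UNIV. \<Sum>j\<in>UNIV. u i * u j * ((1 - exp (- (K i j * s))) * s powr (- a - 1))) = - psi s" for s
  proof -
    have "(\<Sum>i\<in>UNIV. \<Sum>j\<in>UNIV. u i * u j * ((1 - exp (- (K i j * s))) * s powr (- a - 1))) =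
          (\<Sum>i\<in>UNIV. \<Sum>j\<in>UNIV. u i * u j) * s powr (- a - 1) - qf (\<lambda>i j. exp (- (s * K i j))) u * s powr (- a - 1)"
      unfolding qf_def sum_distrib_right sum_subtractf[symmetric]
      by (intro sum.cong refl) (simp add: algebra_simps)
    then show ?thesis by (simp add: sq0 psi_def)
  qed
  have hpsi: "(psi has_integral (- (C * Q))) {0<..}"
    using has_integral_neg[OF h1] unfolding eqpsi eqC by simp
  have psi_nn: "0 \<le> psi s" if "s \<in> {0<..}" for s
  proof -
    have "psd (\<lambda>i j. exp (- (s * K i j)))" using schoenberg[OF sym diag cK] that by simp
    then show ?thesis unfolding psi_def psd_def by simp
  qed
  define N where "N = (\<Sum>i\<in>UNIV. (u i)^2)"
  define T where "T = (\<Sum>i\<in>UNIV. \<Sum>j\<in>UNIV. if i = j then 0 else \<bar>u i * u j\<bar> / K i j)"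
  have Np: "N > 0"
  proof -
    have "(u k)^2 \<le> N" unfolding N_def by (rule member_le_sum) auto
    moreover have "(u k)^2 > 0" using nz by simp
    ultimately show ?thesis by linarith
  qed
  have Tn: "T \<ge> 0" unfolding T_def using Kn by (intro sum_nonneg) auto
  define S0 where "S0 = 2 * T / N + 1"
  have S0p: "S0 > 0" unfolding S0_def using Tn Np by (simp add: add_nonneg_pos)
  define c where "c = N / 2 * (S0 + 1) powr (- a - 1)"
  have cp: "c > 0" unfolding c_def using Np S0p by simp
  have low: "c \<le> psi s" if s: "s \<in> {S0..S0+1}" for s
  proof -
    have sp: "s > 0" using s S0p by simp
    have "qf (\<lambda>i j. exp (- (s * K i j))) u \<ge> N - T / s"
      using qf_exp_large[OF diag pos T_def sp] by (simp add: N_def)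
    moreover have "T / s \<le> N / 2"
    proof -
      have "T / s \<le> T / S0" using s S0p Tn by (intro divide_left_mono) auto
      also have "T / S0 \<le> N / 2" using Np Tn S0p unfolding S0_def by (simp add: field_simps)
      finally show ?thesis .
    qed
    ultimately have q: "qf (\<lambda>i j. exp (- (s * K i j))) u \<ge> N / 2" by simp
    have "(S0 + 1) powr (- a - 1) \<le> s powr (- a - 1)"
      using s sp a by (intro powr_mono2') auto
    then show ?thesis unfolding c_def psi_def using q Np
      by (intro mult_mono) auto
  qed
  have psi_int: "psi integrable_on {0<..}" using hpsi by blast
  have "c = integral {S0..S0+1} (\<lambda>_. c)" by simp
  also have "\<dots> \<le> integral {S0..S0+1} psi"
    using low S0p by (intro integral_le integrable_on_subinterval[OF psi_int]) auto
  also have "\<dots> \<le> integral {0<..} psi"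
    using S0p psi_nn by (intro integral_subset_le integrable_on_subinterval[OF psi_int] psi_int) auto
  also have "\<dots> = - (C * Q)" using hpsi by (rule integral_unique)
  finally have CQ: "C * Q < 0" using cp by simp
  have "C \<ge> 0" unfolding C_def
    using phi_integrable[OF a] set_lebesgue_integral_eq_integral(1)
    by (intro integral_nonneg) (auto simp: phi_def)
  then show ?thesis using CQ unfolding Q_def by (simp add: mult_less_0_iff)
qed


lemma sum_pairs:
  fixes f :: "nat \<Rightarrow> nat \<Rightarrow> real"
  assumes sym: "\<And>k l. f k l = f l k" and diag: "\<And>k. f k k = 0"
  shows "(\<Sum>k<m. \<Sum>l<m. f k l) = 2 * (\<Sum>(k,l)\<in>{(k,l). k < l \<and> l < m}. f k l)"
proof (induction m)
  case 0 then show ?case by simp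
next
  case (Suc m)
  have fin: "finite {(k,l). k < l \<and> l < m}"
    by (rule finite_subset[of _ "{..<m} \<times> {..<m}"]) auto
  have seteq: "{(k,l). k < l \<and> l < Suc m} = {(k,l). k < l \<and> l < m} \<union> (\<lambda>k. (k, m)) ` {..<m}"
    by auto
  have disj: "{(k,l). k < l \<and> l < m} \<inter> (\<lambda>k. (k, m)) ` {..<m} = {}" by auto
  have "(\<Sum>(k,l)\<in>{(k,l). k < l \<and> l < Suc m}. f k l) =
        (\<Sum>(k,l)\<in>{(k,l). k < l \<and> l < m}. f k l) + (\<Sum>k<m. f k m)"
  proof -
    have inj: "inj_on (\<lambda>k. (k, m)) {..<m}" by (auto simp: inj_on_def)
    have r: "(\<Sum>(k,l)\<in>(\<lambda>k. (k, m)) ` {..<m}. f k l) = (\<Sum>k<m. f k m)"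
      by (subst sum.reindex[OF inj]) simp
    have fin2: "finite ((\<lambda>k. (k, m)) ` {..<m})" by simp
    show ?thesis unfolding seteq sum.union_disjoint[OF fin fin2 disj] r ..
  qed
  moreover have "(\<Sum>k<Suc m. \<Sum>l<Suc m. f k l) = (\<Sum>k<m. \<Sum>l<m. f k l) + 2 * (\<Sum>k<m. f k m)"
  proof -
    have e: "(\<Sum>l<m. f m l) = (\<Sum>k<m. f k m)" by (intro sum.cong refl) (rule sym)
    have "(\<Sum>k<Suc m. \<Sum>l<Suc m. f k l) = (\<Sum>k<m. (\<Sum>l<m. f k l) + f k m) + ((\<Sum>l<m. f m l) + f m m)"
      by (simp only: sum.lessThan_Suc)
    also have "\<dots> = (\<Sum>k<m. \<Sum>l<m. f k l) + 2 * (\<Sum>k<m. f k m)"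
      by (simp only: sum.distrib e diag)
    finally show ?thesis .
  qed
  ultimately show ?case using Suc.IH by simp
qed

lemma bil_count:
  fixes D :: "'n::finite \<Rightarrow> 'n \<Rightarrow> real" and h1 h2 :: "nat \<Rightarrow> 'n"
  assumes h1: "\<And>g. (\<Sum>k<m. g (h1 k)) = (\<Sum>x\<in>UNIV. c1 x * g x)"
    and h2: "\<And>g. (\<Sum>k<m. g (h2 k)) = (\<Sum>x\<in>UNIV. c2 x * g x)"
  shows "(\<Sum>k<m. \<Sum>l<m. D (h1 k) (h2 l)) = (\<Sum>x\<in>UNIV. \<Sum>y\<in>UNIV. c1 x * c2 y * D x y)"
proof -
  have "(\<Sum>k<m. \<Sum>l<m. D (h1 k) (h2 l)) = (\<Sum>k<m. (\<lambda>x. \<Sum>y\<in>UNIV. c2 y * D x y) (h1 k))"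
    using h2 by simp
  also have "\<dots> = (\<Sum>x\<in>UNIV. c1 x * (\<Sum>y\<in>UNIV. c2 y * D x y))" by (rule h1)
  also have "\<dots> = (\<Sum>x\<in>UNIV. \<Sum>y\<in>UNIV. c1 x * c2 y * D x y)"
    by (simp add: sum_distrib_left mult.assoc)
  finally show ?thesis .
qed

lemma gr_core:
  fixes D :: "'n::finite \<Rightarrow> 'n \<Rightarrow> real" and a b :: "nat \<Rightarrow> 'n"
  assumes sym: "\<And>i j. D i j = D j i" and diag: "\<And>i. D i i = 0"
    and hA: "\<And>g. (\<Sum>k<m. g (a k)) = (\<Sum>x\<in>UNIV. ca x * g x)"
    and hB: "\<And>g. (\<Sum>k<m. g (b k)) = (\<Sum>x\<in>UNIV. cb x * g x)"
  shows "(\<Sum>(k,l)\<in>{(k,l). k < l \<and> l < m}. D (a k) (a l) + D (b k) (b l)) - (\<Sum>j<m. \<Sum>i<m. D (a j) (b i))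
           = qf D (\<lambda>x. ca x - cb x) / 2"
proof -
  define AA where "AA = (\<Sum>x\<in>UNIV. \<Sum>y\<in>UNIV. ca x * ca y * D x y)"
  define BB where "BB = (\<Sum>x\<in>UNIV. \<Sum>y\<in>UNIV. cb x * cb y * D x y)"
  define AB where "AB = (\<Sum>x\<in>UNIV. \<Sum>y\<in>UNIV. ca x * cb y * D x y)"
  have BA: "(\<Sum>x\<in>UNIV. \<Sum>y\<in>UNIV. cb x * ca y * D x y) = AB"
    unfolding AB_def by (subst sum.swap) (simp add: sym mult.commute)
  have "2 * (\<Sum>(k,l)\<in>{(k,l). k < l \<and> l < m}. D (a k) (a l) + D (b k) (b l)) =
        (\<Sum>k<m. \<Sum>l<m. D (a k) (a l) + D (b k) (b l))"
    by (rule sum_pairs[symmetric]) (auto simp: sym diag)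
  also have "\<dots> = AA + BB"
    unfolding AA_def BB_def using bil_count[OF hA hA, of D] bil_count[OF hB hB, of D]
    by (simp add: sum.distrib)
  finally have P: "(\<Sum>(k,l)\<in>{(k,l). k < l \<and> l < m}. D (a k) (a l) + D (b k) (b l)) = (AA + BB) / 2"
    by simp
  have X: "(\<Sum>j<m. \<Sum>i<m. D (a j) (b i)) = AB"
    unfolding AB_def by (rule bil_count[OF hA hB])
  have "qf D (\<lambda>x. ca x - cb x) = AA - AB - (\<Sum>x\<in>UNIV. \<Sum>y\<in>UNIV. cb x * ca y * D x y) + BB"
    unfolding qf_def AA_def AB_def BB_def
    by (simp add: sum_subtractf[symmetric] sum.distrib[symmetric] algebra_simps)
  then have "qf D (\<lambda>x. ca x - cb x) = AA + BB - 2 * AB" using BA by simp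
  then show ?thesis using P X by simp
qed


lemma count_sum:
  fixes g :: "'n::finite \<Rightarrow> real" and a :: "nat \<Rightarrow> 'n"
  shows "(\<Sum>k<m. g (a k)) = (\<Sum>x\<in>UNIV. real (card {k. k < m \<and> a k = x}) * g x)"
proof -
  have "(\<Sum>k<m. g (a k)) = (\<Sum>x\<in>UNIV. \<Sum>k\<in>{k. k \<in> {..<m} \<and> a k = x}. g (a k))"
    by (rule sum.group[symmetric, of "{..<m}" UNIV a]) auto
  also have "\<dots> = (\<Sum>x\<in>UNIV. real (card {k. k < m \<and> a k = x}) * g x)"
  proof (intro sum.cong refl)
    fix x
    have "(\<Sum>k\<in>{k. k \<in> {..<m} \<and> a k = x}. g (a k)) = (\<Sum>k\<in>{k. k < m \<and> a k = x}. g x)"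
      by (intro sum.cong) auto
    then show "(\<Sum>k\<in>{k. k \<in> {..<m} \<and> a k = x}. g (a k)) = real (card {k. k < m \<and> a k = x}) * g x"
      by simp
  qed
  finally show ?thesis .
qed

lemma qf_hom: "qf D (\<lambda>x. c * v x) = c^2 * qf D v"
  unfolding qf_def sum_distrib_left by (intro sum.cong refl) (simp add: power2_eq_square algebra_simps)

lemma cnd_imp_gr:
  fixes d :: "'n::finite \<Rightarrow> 'n \<Rightarrow> real"
  assumes sym: "\<And>i j. d i j = d j i" and diag: "\<And>i. d i i = 0" and p: "p \<ge> 0"
    and c: "cnd (\<lambda>i j. d i j powr p)"
  shows "gr_exponent UNIV d p"
  unfolding gr_exponent_def
proof (intro conjI p allI impI)
  fix m :: nat and a b :: "nat \<Rightarrow> 'n"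
  define ca where "ca = (\<lambda>x. real (card {k. k < m \<and> a k = x}))"
  define cb where "cb = (\<lambda>x. real (card {k. k < m \<and> b k = x}))"
  have hA: "\<And>g. (\<Sum>k<m. g (a k)) = (\<Sum>x\<in>UNIV. ca x * g x)" unfolding ca_def by (rule count_sum)
  have hB: "\<And>g. (\<Sum>k<m. g (b k)) = (\<Sum>x\<in>UNIV. cb x * g x)" unfolding cb_def by (rule count_sum)
  note core = gr_core[of "\<lambda>i j. d i j powr p", OF _ _ hA hB]
  have "sum ca UNIV = real m" using hA[of "\<lambda>_. 1"] by simp
  moreover have "sum cb UNIV = real m" using hB[of "\<lambda>_. 1"] by simp
  ultimately have "sum (\<lambda>x. ca x - cb x) UNIV = 0" by (simp add: sum_subtractf)
  then have "qf (\<lambda>i j. d i j powr p) (\<lambda>x. ca x - cb x) \<le> 0" using c by (simp add: cnd_def)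
  then show "(\<Sum>(k, l)\<in>{(k, l). k < l \<and> l < m}. d (a k) (a l) powr p + d (b k) (b l) powr p)
         \<le> (\<Sum>j<m. \<Sum>i<m. d (a j) (b i) powr p)"
    using core sym diag by simp
qed

lemma list_count_sum:
  fixes g :: "'n \<Rightarrow> real"
  shows "sum_list (map g (concat (map (\<lambda>x. replicate (c x) x) ys))) = sum_list (map (\<lambda>x. real (c x) * g x) ys)"
  by (induction ys) (simp_all add: sum_list_replicate)

lemma floor_lim: "(\<lambda>n. real_of_int \<lfloor>real (Suc n) * c\<rfloor> / real (Suc n)) \<longlonglongrightarrow> c"
proof (rule tendsto_sandwich[of "\<lambda>n. c - inverse (real (Suc n))" _ _ "\<lambda>n. c"])
  show "\<forall>\<^sub>F n in sequentially. c - inverse (real (Suc n)) \<le> real_of_int \<lfloor>real (Suc n) * c\<rfloor> / real (Suc n)"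
  proof (intro always_eventually allI)
    fix n
    have h: "real (Suc n) * c - 1 \<le> real_of_int \<lfloor>real (Suc n) * c\<rfloor>" by linarith
    have qp: "real (Suc n) > 0" by simp
    have "c - inverse (real (Suc n)) = (real (Suc n) * c - 1) / real (Suc n)"
      using qp by (simp add: field_simps)
    also have "\<dots> \<le> real_of_int \<lfloor>real (Suc n) * c\<rfloor> / real (Suc n)"
      using h qp by (intro divide_right_mono) auto
    finally show "c - inverse (real (Suc n)) \<le> real_of_int \<lfloor>real (Suc n) * c\<rfloor> / real (Suc n)" .
  qed
  show "\<forall>\<^sub>F n in sequentially. real_of_int \<lfloor>real (Suc n) * c\<rfloor> / real (Suc n) \<le> c"
  proof (intro always_eventually allI)
    fix n
    have "real_of_int \<lfloor>real (Suc n) * c\<rfloor> \<le> real (Suc n) * c" by linarith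
    then show "real_of_int \<lfloor>real (Suc n) * c\<rfloor> / real (Suc n) \<le> c"
      by (simp add: field_simps)
  qed
  show "(\<lambda>n. c - inverse (real (Suc n))) \<longlonglongrightarrow> c"
    using tendsto_diff[OF tendsto_const LIMSEQ_inverse_real_of_nat, of c] by simp
qed simp

lemma cnd_from_int:
  fixes D :: "'n::finite \<Rightarrow> 'n \<Rightarrow> real"
  assumes H: "\<And>z::'n \<Rightarrow> int. sum z UNIV = 0 \<Longrightarrow> qf D (\<lambda>x. real_of_int (z x)) \<le> 0"
  shows "cnd D"
  unfolding cnd_def
proof (intro allI impI)
  fix v :: "'n \<Rightarrow> real" assume v: "sum v UNIV = 0"
  define x0 where "x0 = (undefined :: 'n)"
  define q where "q = (\<lambda>n. real (Suc n))"
  define w where "w = (\<lambda>n x. \<lfloor>q n * v x\<rfloor>)"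
  define z where "z = (\<lambda>n x. if x = x0 then - (\<Sum>y\<in>UNIV - {x0}. w n y) else w n x)"
  have zs: "sum (z n) UNIV = 0" for n
  proof -
    have "sum (z n) UNIV = z n x0 + sum (z n) (UNIV - {x0})" by (rule sum.remove) auto
    also have "sum (z n) (UNIV - {x0}) = (\<Sum>y\<in>UNIV - {x0}. w n y)"
      by (intro sum.cong) (auto simp: z_def)
    finally show ?thesis by (simp add: z_def)
  qed
  have le: "qf D (\<lambda>x. real_of_int (z n x) / q n) \<le> 0" for n
  proof -
    have "qf D (\<lambda>x. real_of_int (z n x) / q n) = (1 / q n)^2 * qf D (\<lambda>x. real_of_int (z n x))"
      by (subst qf_hom[symmetric]) simp
    also have "\<dots> \<le> 0" using H[OF zs] by (simp add: mult_nonneg_nonpos)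
    finally show ?thesis .
  qed
  have lim: "(\<lambda>n. real_of_int (z n x) / q n) \<longlonglongrightarrow> v x" for x
  proof (cases "x = x0")
    case False
    then show ?thesis using floor_lim[of "v x"] by (simp add: z_def w_def q_def)
  next
    case True
    have "(\<lambda>n. - (\<Sum>y\<in>UNIV - {x0}. real_of_int (w n y) / q n)) \<longlonglongrightarrow> - (\<Sum>y\<in>UNIV - {x0}. v y)"
      unfolding w_def q_def by (intro tendsto_minus tendsto_sum floor_lim)
    moreover have "- (\<Sum>y\<in>UNIV - {x0}. v y) = v x0"
      using v sum.remove[of UNIV x0 v] by simp
    moreover have "real_of_int (z n x) / q n = - (\<Sum>y\<in>UNIV - {x0}. real_of_int (w n y) / q n)" for n
      using True by (simp add: z_def sum_divide_distrib)
    ultimately show ?thesis using True by simp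
  qed
  have "(\<lambda>n. qf D (\<lambda>x. real_of_int (z n x) / q n)) \<longlonglongrightarrow> qf D v"
    unfolding qf_def by (intro tendsto_intros lim)
  then show "qf D v \<le> 0" using le by (intro LIMSEQ_le_const2) auto
qed

lemma gr_imp_cnd:
  fixes d :: "'n::finite \<Rightarrow> 'n \<Rightarrow> real"
  assumes sym: "\<And>i j. d i j = d j i" and diag: "\<And>i. d i i = 0"
    and g: "gr_exponent UNIV d p"
  shows "cnd (\<lambda>i j. d i j powr p)"
proof (rule cnd_from_int)
  fix z :: "'n \<Rightarrow> int" assume zs: "sum z UNIV = 0"
  obtain ys :: "'n list" where ys: "set ys = UNIV" "distinct ys"
    using finite_distinct_list[of "UNIV :: 'n set"] by auto
  define cp where "cp = (\<lambda>x. nat (z x))"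
  define cm where "cm = (\<lambda>x. nat (- z x))"
  define LA where "LA = concat (map (\<lambda>x. replicate (cp x) x) ys)"
  define LB where "LB = concat (map (\<lambda>x. replicate (cm x) x) ys)"
  have gen: "(\<Sum>k<length (concat (map (\<lambda>x. replicate (c x) x) ys)). g (concat (map (\<lambda>x. replicate (c x) x) ys) ! k))
       = (\<Sum>x\<in>UNIV. real (c x) * g x)" for c and g :: "'n \<Rightarrow> real"
  proof -
    let ?L = "concat (map (\<lambda>x. replicate (c x) x) ys)"
    have "(\<Sum>k<length ?L. g (?L ! k)) = sum_list (map g ?L)"
      using sum_list_sum_nth[of "map g ?L"] by (simp add: atLeast0LessThan)
    also have "\<dots> = sum_list (map (\<lambda>x. real (c x) * g x) ys)" by (rule list_count_sum)
    also have "\<dots> = (\<Sum>x\<in>UNIV. real (c x) * g x)" using ys by (simp add: sum_list_distinct_conv_sum_set)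
    finally show ?thesis .
  qed
  have hA: "\<And>g. (\<Sum>k<length LA. g (LA ! k)) = (\<Sum>x\<in>UNIV. real (cp x) * g x)"
    unfolding LA_def by (rule gen)
  have hB0: "\<And>g. (\<Sum>k<length LB. g (LB ! k)) = (\<Sum>x\<in>UNIV. real (cm x) * g x)"
    unfolding LB_def by (rule gen)
  have zz: "real_of_int (z x) = real (cp x) - real (cm x)" for x
    unfolding cp_def cm_def by simp
  have "real (length LA) = real (length LB)"
  proof -
    have "real (length LA) = (\<Sum>x\<in>UNIV. real (cp x))" using hA[of "\<lambda>_. 1"] by simp
    moreover have "real (length LB) = (\<Sum>x\<in>UNIV. real (cm x))" using hB0[of "\<lambda>_. 1"] by simp
    moreover have "(\<Sum>x\<in>UNIV. real (cp x)) - (\<Sum>x\<in>UNIV. real (cm x)) = 0"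
      using zs by (simp add: sum_subtractf[symmetric] zz[symmetric] of_int_sum[symmetric])
    ultimately show ?thesis by simp
  qed
  then have len: "length LB = length LA" by simp
  have hB: "\<And>g. (\<Sum>k<length LA. g (LB ! k)) = (\<Sum>x\<in>UNIV. real (cm x) * g x)"
    using hB0 len by simp
  note core = gr_core[of "\<lambda>i j. d i j powr p", OF _ _ hA hB]
  have "(\<Sum>(k, l)\<in>{(k, l). k < l \<and> l < length LA}. d (LA ! k) (LA ! l) powr p + d (LB ! k) (LB ! l) powr p)
         \<le> (\<Sum>j<length LA. \<Sum>i<length LA. d (LA ! j) (LB ! i) powr p)"
    using g unfolding gr_exponent_def by blast
  then have "qf (\<lambda>i j. d i j powr p) (\<lambda>x. real (cp x) - real (cm x)) \<le> 0"
    using core sym diag by simp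
  then show "qf (\<lambda>i j. d i j powr p) (\<lambda>x. real_of_int (z x)) \<le> 0" by (simp add: zz)
qed


lemma qf_bound:
  fixes A :: "'n::finite \<Rightarrow> 'n \<Rightarrow> real"
  shows "qf A u \<le> (\<Sum>i\<in>UNIV. \<Sum>j\<in>UNIV. \<bar>A i j\<bar>) * (\<Sum>i\<in>UNIV. (u i)^2)"
proof -
  define N where "N = (\<Sum>i\<in>UNIV. (u i)^2)"
  have ui: "(u i)^2 \<le> N" for i unfolding N_def by (rule member_le_sum) auto
  have uij: "\<bar>u i * u j\<bar> \<le> N" for i j
  proof -
    have "\<bar>u i * u j\<bar> \<le> ((u i)^2 + (u j)^2) / 2"
      using sum_squares_bound[of "\<bar>u i\<bar>" "\<bar>u j\<bar>"]
      by (simp add: abs_mult power2_eq_square field_simps)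
    also have "\<dots> \<le> N" using ui[of i] ui[of j] by simp
    finally show ?thesis .
  qed
  have "qf A u \<le> (\<Sum>i\<in>UNIV. \<Sum>j\<in>UNIV. \<bar>A i j\<bar> * N)"
    unfolding qf_def
  proof (intro sum_mono)
    fix i j
    have "u i * u j * A i j \<le> \<bar>u i * u j\<bar> * \<bar>A i j\<bar>" by (simp add: abs_mult[symmetric])
    also have "\<dots> \<le> N * \<bar>A i j\<bar>" using uij by (intro mult_right_mono) auto
    finally show "u i * u j * A i j \<le> \<bar>A i j\<bar> * N" by (simp add: mult.commute)
  qed
  also have "\<dots> = (\<Sum>i\<in>UNIV. \<Sum>j\<in>UNIV. \<bar>A i j\<bar>) * N" by (simp add: sum_distrib_right)
  finally show ?thesis unfolding N_def .
qed



context
  fixes d :: "'n::finite \<Rightarrow> 'n \<Rightarrow> real"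
  assumes sym: "\<And>i j. d i j = d j i" and diag: "\<And>i. d i i = 0"
    and pos: "\<And>i j. i \<noteq> j \<Longrightarrow> d i j > 0"
    and rs: "\<And>p i k. (\<Sum>j\<in>UNIV. d i j powr p) = (\<Sum>j\<in>UNIV. d k j powr p)"
    and two: "\<And>i::'n. \<exists>j. j \<noteq> i"
begin

lemma Dsym: "d i j powr p = d j i powr p" using sym[of i j] by simp
lemma Ddiag: "d i i powr p = 0" by (simp add: diag)
lemma Dpos: "i \<noteq> j \<Longrightarrow> d i j powr p > 0" using pos[of i j] by simp

lemma colsum: "(\<Sum>i\<in>UNIV. d i j powr p) = (\<Sum>i\<in>UNIV. d j i powr p)"
  by (intro sum.cong refl) (rule Dsym)

lemma colsum_const: "(\<Sum>i\<in>UNIV. d i j powr p) = (\<Sum>i\<in>UNIV. d k i powr p)"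
  using colsum[of j p] rs[where p=p and i=j and k=k] by simp

lemma rowpos: "(\<Sum>j\<in>UNIV. d i j powr p) > 0"
proof -
  obtain j where j: "j \<noteq> i" using two[of i] by blast
  have "d i j powr p \<le> (\<Sum>j\<in>UNIV. d i j powr p)" by (rule member_le_sum) auto
  moreover have "0 < d i j powr p" using Dpos j by auto
  ultimately show ?thesis by linarith
qed

lemma qf0: "qf (\<lambda>i j. d i j powr 0) u = (sum u UNIV)^2 - (\<Sum>i\<in>UNIV. (u i)^2)"
proof -
  have "d i j \<noteq> 0" if "i \<noteq> j" for i j using pos[OF that] by simp
  then have "(\<lambda>i j. d i j powr 0) = (\<lambda>i j. 1 - (if i = j then 1 else 0))"
    using diag by (auto simp: fun_eq_iff)
  moreover have "qf (\<lambda>i j. if i = j then 1 else 0) u = (\<Sum>i\<in>UNIV. (u i)^2)"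
    unfolding qf_def by (simp add: if_distrib[of "\<lambda>x. _ * x"] power2_eq_square cong: if_cong)
  ultimately show ?thesis by (simp add: qf_diff qf_const1)
qed

lemma cnd0: "cnd (\<lambda>i j. d i j powr 0)"
  unfolding cnd_def qf0 by (auto intro: sum_nonneg)

lemma qf_shift:
  "qf (\<lambda>i j. d i j powr p) (\<lambda>i. u i + t * w i) =
     qf (\<lambda>i j. d i j powr p) u + 2 * t * (\<Sum>i\<in>UNIV. w i * (\<Sum>j\<in>UNIV. d i j powr p * u j))
     + t^2 * qf (\<lambda>i j. d i j powr p) w"
proof -
  define B where "B = (\<Sum>i\<in>UNIV. w i * (\<Sum>j\<in>UNIV. d i j powr p * u j))"
  have B1: "(\<Sum>i\<in>UNIV. \<Sum>j\<in>UNIV. w i * u j * d i j powr p) = B"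
    unfolding B_def sum_distrib_left by (intro sum.cong refl) (simp add: algebra_simps)
  have B2: "(\<Sum>i\<in>UNIV. \<Sum>j\<in>UNIV. u i * w j * d i j powr p) = B"
    unfolding B1[symmetric] by (subst sum.swap) (simp add: Dsym[of _ _ p] algebra_simps)
  have "qf (\<lambda>i j. d i j powr p) (\<lambda>i. u i + t * w i) =
        (\<Sum>i\<in>UNIV. \<Sum>j\<in>UNIV. u i * u j * d i j powr p + t * (u i * w j * d i j powr p)
          + t * (w i * u j * d i j powr p) + t^2 * (w i * w j * d i j powr p))"
    unfolding qf_def by (intro sum.cong refl) (simp add: algebra_simps power2_eq_square)
  also have "\<dots> = qf (\<lambda>i j. d i j powr p) u + t * B + t * B + t^2 * qf (\<lambda>i j. d i j powr p) w"
    by (simp add: sum.distrib qf_def sum_distrib_left[symmetric] B1 B2)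
  finally show ?thesis unfolding B_def by simp
qed

lemma kernel:
  assumes c: "cnd (\<lambda>i j. d i j powr p)" and u: "sum u UNIV = 0"
    and z: "qf (\<lambda>i j. d i j powr p) u = 0"
  shows "(\<Sum>j\<in>UNIV. d i j powr p * u j) = 0"
proof -
  define Du where "Du = (\<lambda>i. \<Sum>j\<in>UNIV. d i j powr p * u j)"
  have Bz: "(\<Sum>i\<in>UNIV. w i * Du i) = 0" if w: "sum w UNIV = 0" for w
  proof (rule ccontr)
    define B where "B = (\<Sum>i\<in>UNIV. w i * Du i)"
    define Q where "Q = qf (\<lambda>i j. d i j powr p) w"
    assume "(\<Sum>i\<in>UNIV. w i * Du i) \<noteq> 0"
    then have Bn: "B \<noteq> 0" by (simp add: B_def)
    have Q: "Q \<le> 0" using c w by (simp add: cnd_def Q_def)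
    define t where "t = B / (1 - Q)"
    have "sum (\<lambda>i. u i + t * w i) UNIV = 0" using u w by (simp add: sum.distrib sum_distrib_left[symmetric])
    then have "qf (\<lambda>i j. d i j powr p) (\<lambda>i. u i + t * w i) \<le> 0" using c by (simp add: cnd_def)
    then have le: "2 * t * B + t^2 * Q \<le> 0" using z by (simp add: qf_shift B_def Du_def Q_def)
    have Qp: "1 - Q > 0" using Q by simp
    have e: "t * (1 - Q) = B" using Qp by (simp add: t_def)
    have "t * B = t * (t * (1 - Q))" using e by simp
    then have e2: "t^2 * Q = t^2 - t * B" by (simp add: algebra_simps power2_eq_square)
    have B2: "B^2 > 0" using Bn by simp
    have tB: "t * B > 0" using divide_pos_pos[OF B2 Qp] by (simp add: t_def power2_eq_square)
    have "t * B + t^2 > 0" using tB by (simp add: add_pos_nonneg)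
    then show False using le e2 by (simp add: algebra_simps)
  qed
  have eq: "Du i = Du k" for i k
  proof -
    have "sum (\<lambda>x. (if x = i then 1 else 0) - (if x = k then 1 else 0)) UNIV = (0::real)"
      by (simp add: sum_subtractf)
    from Bz[OF this] show ?thesis
      by (simp add: left_diff_distrib sum_subtractf if_distrib[of "\<lambda>x. x * _"] cong: if_cong)
  qed
  have "(\<Sum>i\<in>UNIV. Du i) = 0"
  proof -
    have "(\<Sum>i\<in>UNIV. Du i) = (\<Sum>j\<in>UNIV. u j * (\<Sum>i\<in>UNIV. d i j powr p))"
      unfolding Du_def by (subst sum.swap) (simp add: sum_distrib_left algebra_simps)
    also have "\<dots> = (\<Sum>j\<in>UNIV. u j * (\<Sum>i\<in>UNIV. d undefined i powr p))"
      by (intro sum.cong refl) (simp only: colsum_const[of _ p undefined])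
    finally have "(\<Sum>i\<in>UNIV. Du i) = sum u UNIV * (\<Sum>i\<in>UNIV. d undefined i powr p)"
      by (simp add: sum_distrib_right)
    then show ?thesis using u by simp
  qed
  moreover have "(\<Sum>i'\<in>UNIV. Du i') = of_nat CARD('n) * Du i"
  proof -
    have "(\<Sum>i'\<in>UNIV. Du i') = (\<Sum>i'\<in>(UNIV::'n set). Du i)"
    proof (rule sum.cong)
      fix x show "Du x = Du i" by (rule eq)
    qed simp
    then show ?thesis by simp
  qed
  ultimately show ?thesis by (simp add: Du_def)
qed

lemma Mv: "(dist_matrix d p *v u) $ i = (\<Sum>j\<in>UNIV. d i j powr p * u $ j)"
  by (simp add: matrix_vector_mult_def dist_matrix_def)

lemma inner_qf: "u \<bullet> (dist_matrix d p *v u) = qf (\<lambda>i j. d i j powr p) (\<lambda>i. u $ i)"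
  unfolding inner_vec_def Mv qf_def by (simp add: sum_distrib_left algebra_simps)

lemma det_ne0_iff: "det (dist_matrix d p) \<noteq> 0 \<longleftrightarrow> (\<forall>u. dist_matrix d p *v u = 0 \<longrightarrow> u = 0)"
  by (metis invertible_det_nz invertible_left_inverse matrix_left_invertible_ker)

lemma sum_ker: "dist_matrix d p *v u = 0 \<Longrightarrow> sum (\<lambda>i. u $ i) UNIV = 0"
proof -
  assume z: "dist_matrix d p *v u = 0"
  define i0 where "i0 = (undefined :: 'n)"
  have "0 = (\<Sum>i\<in>UNIV. (dist_matrix d p *v u) $ i)" using z by simp
  also have "\<dots> = (\<Sum>i\<in>UNIV. \<Sum>j\<in>UNIV. d i j powr p * u $ j)"
    unfolding Mv ..
  also have "\<dots> = (\<Sum>j\<in>UNIV. \<Sum>i\<in>UNIV. d i j powr p * u $ j)"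
    by (rule sum.swap)
  also have "\<dots> = (\<Sum>j\<in>UNIV. (\<Sum>i\<in>UNIV. d i j powr p) * u $ j)"
    by (simp only: sum_distrib_right)
  also have "\<dots> = (\<Sum>j\<in>UNIV. (\<Sum>i\<in>UNIV. d i0 i powr p) * u $ j)"
    by (intro sum.cong refl) (simp only: colsum_const[of _ p i0])
  also have "\<dots> = (\<Sum>i\<in>UNIV. d i0 i powr p) * sum (\<lambda>i. u $ i) UNIV"
    by (simp only: sum_distrib_left)
  finally show ?thesis using rowpos[of i0 p] by simp
qed

lemma strict_det:
  assumes g: "gr_exponent UNIV d p" and b: "0 \<le> b" "b < p"
  shows "det (dist_matrix d b) \<noteq> 0"
proof -
  have "u = 0" if z: "dist_matrix d b *v u = 0" for u :: "real^'n"
  proof -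
  have s: "sum (\<lambda>i. u $ i) UNIV = 0" by (rule sum_ker[OF z])
  have q: "qf (\<lambda>i j. d i j powr b) (\<lambda>i. u $ i) = 0" using inner_qf[of u b] z by simp
  show "u = 0"
  proof (rule ccontr)
    assume "u \<noteq> 0"
    then obtain k where k: "u $ k \<noteq> 0" by (auto simp: vec_eq_iff)
    show False
    proof (cases "b = 0")
      case True
      have "(u $ k)^2 \<le> (\<Sum>i\<in>UNIV. (u $ i)^2)" by (rule member_le_sum) auto
      moreover have "(u $ k)^2 > 0" using k by simp
      moreover have "qf (\<lambda>i j. d i j powr 0) (\<lambda>i. u $ i) = (sum (\<lambda>i. u $ i) UNIV)^2 - (\<Sum>i\<in>UNIV. (u $ i)^2)"
        by (rule qf0)
      moreover have "qf (\<lambda>i j. d i j powr 0) (\<lambda>i. u $ i) = 0" using q True by simp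
      ultimately show False using s by simp
    next
      case False
      then have bp: "0 < b" using b by simp
      have pp: "0 < p" using b by simp
      have c: "cnd (\<lambda>i j. d i j powr p)" by (rule gr_imp_cnd[OF sym diag g])
      have "qf (\<lambda>i j. (d i j powr p) powr (b / p)) (\<lambda>i. u $ i) < 0"
        by (rule strict_power[OF _ _ _ c _ _ s k])
           (use bp pp b in \<open>auto simp: sym diag dest: pos\<close>)
      moreover have "(\<lambda>i j. (d i j powr p) powr (b / p)) = (\<lambda>i j. d i j powr b)"
        using pp by (simp add: powr_powr)
      ultimately show False using q by simp
    qed
  qed
  qed
  then show ?thesis using det_ne0_iff by blast
qed

lemma vec_kernel:
  assumes c: "cnd (\<lambda>i j. d i j powr p)" and u: "sum (\<lambda>i. u $ i) UNIV = 0"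
    and z: "qf (\<lambda>i j. d i j powr p) (\<lambda>i. u $ i) = 0"
  shows "dist_matrix d p *v u = 0"
  using kernel[OF c u z] by (simp add: vec_eq_iff Mv)

lemma negdef_eps:
  assumes c: "cnd (\<lambda>i j. d i j powr q)" and dt: "det (dist_matrix d q) \<noteq> 0"
  shows "\<exists>e>0. \<forall>u. sum u UNIV = 0 \<longrightarrow> qf (\<lambda>i j. d i j powr q) u \<le> - e * (\<Sum>i\<in>UNIV. (u i)^2)"
proof -
  define U where "U = {v::real^'n. sum (\<lambda>i. v $ i) UNIV = 0} \<inter> sphere 0 1"
  define f where "f = (\<lambda>v::real^'n. qf (\<lambda>i j. d i j powr q) (\<lambda>i. v $ i))"
  have cl: "closed {v::real^'n. sum (\<lambda>i. v $ i) UNIV = 0}"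
    by (intro closed_Collect_eq continuous_intros)
  have cpt: "compact U" unfolding U_def
    by (metis Int_commute compact_Int_closed compact_sphere cl)
  obtain i0 :: 'n where True by simp
  obtain j0 where j0: "j0 \<noteq> i0" using two[of i0] by blast
  define w where "w = (\<chi> x. (if x = i0 then 1 else 0) - (if x = j0 then 1 else (0::real)))"
  have wnz: "w \<noteq> 0" using j0 by (auto simp: vec_eq_iff w_def)
  have sw: "sum (\<lambda>i. w $ i) UNIV = 0" by (simp add: w_def sum_subtractf)
  have "sum (\<lambda>i. (sgn w) $ i) UNIV = 0"
    using sw by (simp add: sgn_div_norm divide_inverse sum_distrib_left[symmetric])
  then have "sgn w \<in> U"
    using wnz by (simp add: U_def norm_sgn)
  then have ne: "U \<noteq> {}" by blast
  have cont: "continuous_on U f" unfolding f_def qf_def by (intro continuous_intros)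
  obtain v0 where v0: "v0 \<in> U" and mx: "\<And>y. y \<in> U \<Longrightarrow> f y \<le> f v0"
    using continuous_attains_sup[OF cpt ne cont] by blast
  have v0s: "sum (\<lambda>i. v0 $ i) UNIV = 0" and v0n: "norm v0 = 1" using v0 by (auto simp: U_def)
  have le0: "f v0 \<le> 0" using c v0s by (simp add: f_def cnd_def)
  have neg: "f v0 < 0"
  proof (rule ccontr)
    assume "\<not> f v0 < 0"
    then have "f v0 = 0" using le0 by simp
    then have "dist_matrix d q *v v0 = 0" using vec_kernel[OF c v0s] by (simp add: f_def)
    then have "v0 = 0" using dt det_ne0_iff by blast
    then show False using v0n by simp
  qed
  show ?thesis
  proof (intro exI[of _ "- f v0"] conjI allI impI)
    show "0 < - f v0" using neg by simp
    fix u :: "'n \<Rightarrow> real" assume su: "sum u UNIV = 0"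
    define x where "x = (\<chi> i. u i)"
    have xu: "(\<lambda>i. x $ i) = u" by (simp add: x_def)
    have nx: "(norm x)^2 = (\<Sum>i\<in>UNIV. (u i)^2)"
    proof -
      have "(norm x)^2 = x \<bullet> x" by (rule power2_norm_eq_inner)
      also have "\<dots> = (\<Sum>i\<in>UNIV. (u i)^2)" by (simp add: inner_vec_def x_def power2_eq_square)
      finally show ?thesis .
    qed
    show "qf (\<lambda>i j. d i j powr q) u \<le> - (- f v0) * (\<Sum>i\<in>UNIV. (u i)^2)"
    proof (cases "x = 0")
      case True
      then have "u = (\<lambda>_. 0)" using xu by auto
      then show ?thesis by (simp add: qf_def)
    next
      case False
      have "sum (\<lambda>i. (sgn x) $ i) UNIV = 0"
        using su by (simp add: x_def sgn_div_norm divide_inverse sum_distrib_left[symmetric])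
      then have sx: "sgn x \<in> U"
        using False by (simp add: U_def norm_sgn)
      have "(\<lambda>i. x $ i) = (\<lambda>i. norm x * (sgn x) $ i)"
        using False by (simp add: sgn_div_norm fun_eq_iff)
      then have "qf (\<lambda>i j. d i j powr q) u = (norm x)^2 * f (sgn x)"
        unfolding f_def using xu by (simp add: qf_hom)
      also have "\<dots> \<le> (norm x)^2 * f v0" using mx[OF sx] by (intro mult_left_mono) auto
      finally show ?thesis using nx by (simp add: mult.commute)
    qed
  qed
qed

lemma powr_cont:
  assumes "ps \<longlonglongrightarrow> q"
  shows "(\<lambda>n. d i j powr ps n) \<longlonglongrightarrow> d i j powr q"
proof (cases "d i j = 0")
  case True then show ?thesis by simp
next
  case False then show ?thesis by (intro tendsto_powr tendsto_const assms)
qed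

lemma qf_cont:
  assumes "ps \<longlonglongrightarrow> q"
  shows "(\<lambda>n. qf (\<lambda>i j. d i j powr ps n) u) \<longlonglongrightarrow> qf (\<lambda>i j. d i j powr q) u"
  unfolding qf_def by (intro tendsto_intros powr_cont assms)

lemma perturb:
  assumes c: "cnd (\<lambda>i j. d i j powr q)" and q: "q \<ge> 0" and dt: "det (dist_matrix d q) \<noteq> 0"
  shows "\<exists>p>q. gr_exponent UNIV d p"
proof -
  obtain e where e: "e > 0" and E: "\<And>u. sum u UNIV = 0 \<Longrightarrow> qf (\<lambda>i j. d i j powr q) u \<le> - e * (\<Sum>i\<in>UNIV. (u i)^2)"
    using negdef_eps[OF c dt] by blast
  define ps where "ps = (\<lambda>n. q + inverse (real (Suc n)))"
  have psl: "ps \<longlonglongrightarrow> q"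
    unfolding ps_def using tendsto_add[OF tendsto_const LIMSEQ_inverse_real_of_nat, of q] by simp
  define Del where "Del = (\<lambda>n. \<Sum>i\<in>UNIV. \<Sum>j\<in>UNIV. \<bar>d i j powr ps n - d i j powr q\<bar>)"
  have "Del \<longlonglongrightarrow> (\<Sum>i\<in>UNIV. \<Sum>j\<in>UNIV. \<bar>d i j powr q - d i j powr q\<bar>)"
    unfolding Del_def by (intro tendsto_intros powr_cont psl)
  then have "Del \<longlonglongrightarrow> 0" by simp
  then have "eventually (\<lambda>n. Del n < e) sequentially" using e by (rule order_tendstoD)
  then obtain n where n: "Del n < e" by (auto simp: eventually_sequentially)
  have pq: "ps n > q" by (simp add: ps_def)
  have "cnd (\<lambda>i j. d i j powr ps n)"
    unfolding cnd_def
  proof (intro allI impI)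
    fix u :: "'n \<Rightarrow> real" assume su: "sum u UNIV = 0"
    define N where "N = (\<Sum>i\<in>UNIV. (u i)^2)"
    have Nn: "N \<ge> 0" unfolding N_def by (intro sum_nonneg) auto
    have "qf (\<lambda>i j. d i j powr ps n) u = qf (\<lambda>i j. d i j powr q) u + qf (\<lambda>i j. d i j powr ps n - d i j powr q) u"
      by (simp add: qf_diff)
    also have "\<dots> \<le> - e * N + Del n * N"
      using E[OF su] qf_bound[of "\<lambda>i j. d i j powr ps n - d i j powr q" u]
      by (simp add: N_def Del_def)
    also have "\<dots> \<le> 0"
    proof -
      have "Del n * N \<le> e * N" using n Nn by (intro mult_right_mono) auto
      then show ?thesis by linarith
    qed
    finally show "qf (\<lambda>i j. d i j powr ps n) u \<le> 0" .
  qed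
  then have "gr_exponent UNIV d (ps n)" using pq q by (intro cnd_imp_gr sym diag) auto
  then show ?thesis using pq by blast
qed

lemma sup_in:
  assumes bdd: "bdd_above {p. gr_exponent UNIV d p}"
  shows "gr_exponent UNIV d (Sup {p. gr_exponent UNIV d p})"
proof -
  define S where "S = {p. gr_exponent UNIV d p}"
  define q where "q = Sup S"
  have g0: "gr_exponent UNIV d 0" using cnd0 by (intro cnd_imp_gr sym diag) auto
  then have ne: "S \<noteq> {}" by (auto simp: S_def)
  have bS: "bdd_above S" using bdd by (simp add: S_def)
  have q0: "q \<ge> 0" unfolding q_def using g0 bS by (intro cSup_upper) (auto simp: S_def)
  have "\<exists>p. p \<in> S \<and> q - inverse (real (Suc n)) < p" for n
  proof -
    have "q - inverse (real (Suc n)) < Sup S" unfolding q_def by simp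
    then show ?thesis using less_cSupE[OF _ ne] by metis
  qed
  then obtain ps where ps: "\<And>n. ps n \<in> S" "\<And>n. q - inverse (real (Suc n)) < ps n" by metis
  have psq: "ps n \<le> q" for n unfolding q_def using ps(1) bS by (rule cSup_upper)
  have psl: "ps \<longlonglongrightarrow> q"
  proof (rule tendsto_sandwich[of "\<lambda>n. q - inverse (real (Suc n))" _ _ "\<lambda>n. q"])
    show "\<forall>\<^sub>F n in sequentially. q - inverse (real (Suc n)) \<le> ps n"
      using ps(2) by (auto intro: always_eventually less_imp_le)
    show "\<forall>\<^sub>F n in sequentially. ps n \<le> q" using psq by (auto intro: always_eventually)
    show "(\<lambda>n. q - inverse (real (Suc n))) \<longlonglongrightarrow> q"
      using tendsto_diff[OF tendsto_const LIMSEQ_inverse_real_of_nat, of q] by simp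
  qed simp
  have "cnd (\<lambda>i j. d i j powr q)"
    unfolding cnd_def
  proof (intro allI impI)
    fix u :: "'n \<Rightarrow> real" assume su: "sum u UNIV = 0"
    have "qf (\<lambda>i j. d i j powr ps n) u \<le> 0" for n
    proof -
      have "cnd (\<lambda>i j. d i j powr ps n)"
        by (rule gr_imp_cnd[OF sym diag]) (use ps(1)[of n] in \<open>simp add: S_def\<close>)
      then show ?thesis using su by (simp add: cnd_def)
    qed
    then show "qf (\<lambda>i j. d i j powr q) u \<le> 0"
      using qf_cont[OF psl, of u] by (intro LIMSEQ_le_const2) auto
  qed
  then show ?thesis using q0 unfolding q_def S_def by (intro cnd_imp_gr sym diag) auto
qed

end


theorem theorem3p1:
  fixes d :: "'n::finite \<Rightarrow> 'n \<Rightarrow> real"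
  assumes metric: "metric_on UNIV d"
    and card: "CARD('n) \<ge> 2"
    and rows: "\<forall>i k. \<exists>\<sigma>. \<sigma> permutes (UNIV :: 'n set) \<and> (\<forall>j. d i j = d k (\<sigma> j))"
  shows "gen_roundness UNIV d = Inf {ereal p | p. p \<ge> 0 \<and> det (dist_matrix d p) = 0} \<and>
         (gen_roundness UNIV d < \<infinity> \<longrightarrow>
           (\<forall>u :: real^'n.
              ((\<Sum>i\<in>UNIV. u $ i) = 0 \<and>
               u \<bullet> (dist_matrix d (real_of_ereal (gen_roundness UNIV d)) *v u) = 0)
              \<longleftrightarrow> dist_matrix d (real_of_ereal (gen_roundness UNIV d)) *v u = 0))"
proof -
  have sym: "\<And>i j. d i j = d j i" and diag: "\<And>i. d i i = 0"
    using metric by (auto simp: metric_on_def)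
  have pos: "\<And>i j. i \<noteq> j \<Longrightarrow> d i j > 0"
  proof -
    fix i j :: 'n assume ij: "i \<noteq> j"
    have "d i i \<le> d i j + d j i" using metric unfolding metric_on_def by blast
    then have "0 \<le> d i j" using sym[of j i] diag[of i] by simp
    moreover have "d i j \<noteq> 0" using metric ij by (auto simp: metric_on_def)
    ultimately show "d i j > 0" by simp
  qed
  have rs: "\<And>p i k. (\<Sum>j\<in>UNIV. d i j powr p) = (\<Sum>j\<in>UNIV. d k j powr p)"
  proof -
    fix p :: real and i k :: 'n
    obtain \<sigma> where s: "\<sigma> permutes (UNIV :: 'n set)" "\<forall>j. d i j = d k (\<sigma> j)" using rows by blast
    have "(\<Sum>j\<in>UNIV. d k j powr p) = (\<Sum>j\<in>UNIV. ((\<lambda>j. d k j powr p) \<circ> \<sigma>) j)"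
      by (rule sum.permute[OF s(1)])
    also have "\<dots> = (\<Sum>j\<in>UNIV. d i j powr p)" using s(2) by simp
    finally show "(\<Sum>j\<in>UNIV. d i j powr p) = (\<Sum>j\<in>UNIV. d k j powr p)" by simp
  qed
  have two: "\<And>i::'n. \<exists>j. j \<noteq> i"
  proof (rule ccontr)
    fix i :: 'n assume "\<not> (\<exists>j. j \<noteq> i)"
    then have u: "UNIV = {i}" by auto
    have "CARD('n) = card {i}" by (subst u[symmetric]) (rule refl)
    then have "CARD('n) = 1" by simp
    then show False using card by simp
  qed
  have L1: "\<And>p b. gr_exponent UNIV d p \<Longrightarrow> 0 \<le> b \<Longrightarrow> b < p \<Longrightarrow> det (dist_matrix d b) \<noteq> 0"
    by (rule strict_det[where d=d]) (assumption | rule sym diag rs two pos)+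
  have L2: "\<And>q. cnd (\<lambda>i j. d i j powr q) \<Longrightarrow> q \<ge> 0 \<Longrightarrow> det (dist_matrix d q) \<noteq> 0 \<Longrightarrow> \<exists>p>q. gr_exponent UNIV d p"
    by (rule perturb[where d=d]) (assumption | rule sym diag rs two pos)+
  have L3: "bdd_above {p. gr_exponent UNIV d p} \<Longrightarrow> gr_exponent UNIV d (Sup {p. gr_exponent UNIV d p})"
    by (rule sup_in[where d=d]) (assumption | rule sym diag rs two pos)+
  have L4: "\<And>p u. cnd (\<lambda>i j. d i j powr p) \<Longrightarrow> sum (\<lambda>i. u $ i) UNIV = 0 \<Longrightarrow>
      qf (\<lambda>i j. d i j powr p) (\<lambda>i. u $ i) = 0 \<Longrightarrow> dist_matrix d p *v u = 0"
    by (rule vec_kernel[where d=d]) (assumption | rule sym diag rs two pos)+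
  have L5: "\<And>p u. dist_matrix d p *v u = 0 \<Longrightarrow> sum (\<lambda>i. u $ i) UNIV = 0"
    by (rule sum_ker[where d=d]) (assumption | rule sym diag rs two pos)+
  have L6: "\<And>p u. u \<bullet> (dist_matrix d p *v u) = qf (\<lambda>i j. d i j powr p) (\<lambda>i. u $ i)"
    by (rule inner_qf[where d=d]) (assumption | rule sym diag rs two pos)+
  define S where "S = {p. gr_exponent UNIV d p}"
  have gS: "{ereal p | p. gr_exponent UNIV d p} = ereal ` S" by (auto simp: S_def)
  have gen: "gen_roundness UNIV d = Sup (ereal ` S)" unfolding gen_roundness_def gS ..
  have c0: "cnd (\<lambda>i j. d i j powr 0)"
    apply (rule cnd0[where d=d])
    apply (fact sym)
    apply (fact diag)
    apply (fact pos)
    apply (fact rs)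
    apply (fact two)
    done
  have "gr_exponent UNIV d 0" by (rule cnd_imp_gr[OF sym diag]) (use c0 in auto)
  then have g0: "0 \<in> S" by (simp add: S_def)
  have Snn: "\<And>p. p \<in> S \<Longrightarrow> p \<ge> 0" by (auto simp: S_def gr_exponent_def)
  define Z where "Z = {ereal p | p. p \<ge> 0 \<and> det (dist_matrix d p) = 0}"
  show ?thesis
  proof (cases "bdd_above S")
    case True
    define q where "q = Sup S"
    have gq: "gr_exponent UNIV d q" using L3 True by (simp add: q_def S_def)
    have q0: "q \<ge> 0" using gq by (simp add: gr_exponent_def)
    have up: "\<And>p. p \<in> S \<Longrightarrow> p \<le> q" unfolding q_def using True by (simp add: cSup_upper)
    have supq: "Sup (ereal ` S) = ereal q"
    proof (rule antisym)
      show "Sup (ereal ` S) \<le> ereal q" using up by (auto intro!: Sup_least)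
      show "ereal q \<le> Sup (ereal ` S)" using gq by (auto intro!: Sup_upper simp: S_def)
    qed
    have cq: "cnd (\<lambda>i j. d i j powr q)" by (rule gr_imp_cnd[OF sym diag gq])
    have dq: "det (dist_matrix d q) = 0"
    proof (rule ccontr)
      assume "det (dist_matrix d q) \<noteq> 0"
      then obtain p where "p > q" "gr_exponent UNIV d p" using L2[OF cq q0] by blast
      then show False using up[of p] by (simp add: S_def)
    qed
    have infq: "Inf Z = ereal q"
    proof (rule antisym)
      show "Inf Z \<le> ereal q" using q0 dq by (auto intro!: Inf_lower simp: Z_def)
      show "ereal q \<le> Inf Z"
      proof (rule Inf_greatest)
        fix z assume "z \<in> Z"
        then obtain b where b: "z = ereal b" "b \<ge> 0" "det (dist_matrix d b) = 0" by (auto simp: Z_def)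
        show "ereal q \<le> z"
        proof (rule ccontr)
          assume "\<not> ereal q \<le> z"
          then have "b < q" using b by simp
          then obtain p where "p \<in> S" "b < p" using less_cSup_iff[of S b] True g0 by (auto simp: q_def)
          then have "det (dist_matrix d b) \<noteq> 0" using L1[of p b] b by (simp add: S_def)
          then show False using b by simp
        qed
      qed
    qed
    have part2: "\<forall>u :: real^'n. ((\<Sum>i\<in>UNIV. u $ i) = 0 \<and> u \<bullet> (dist_matrix d q *v u) = 0)
              \<longleftrightarrow> dist_matrix d q *v u = 0"
    proof (intro allI iffI)
      fix u :: "real^'n"
      assume a: "(\<Sum>i\<in>UNIV. u $ i) = 0 \<and> u \<bullet> (dist_matrix d q *v u) = 0"
      then show "dist_matrix d q *v u = 0" using L4[OF cq] L6[of u q] by simp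
    next
      fix u :: "real^'n"
      assume a: "dist_matrix d q *v u = 0"
      then show "(\<Sum>i\<in>UNIV. u $ i) = 0 \<and> u \<bullet> (dist_matrix d q *v u) = 0"
        using L5[OF a] by simp
    qed
    show ?thesis using gen supq infq part2 unfolding Z_def by simp
  next
    case False
    have unb: "\<exists>p\<in>S. r < p" for r using False by (auto simp: bdd_above_def not_le)
    have top: "Sup (ereal ` S) = top"
    proof (subst Sup_eq_top_iff, intro allI impI)
      fix x :: ereal assume "x < top"
      show "\<exists>i\<in>ereal ` S. x < i"
      proof (cases x)
        case (real r) then show ?thesis using unb[of r] by force
      next
        case PInf then show ?thesis using \<open>x < top\<close> by simp
      next
        case MInf then show ?thesis using g0 by force
      qed
    qed
    then have inf: "gen_roundness UNIV d = \<infinity>" unfolding gen by (simp add: top_ereal_def)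
    have "Z = {}"
    proof -
      have "det (dist_matrix d b) \<noteq> 0" if "b \<ge> 0" for b
      proof -
        obtain p where "p \<in> S" "b < p" using unb[of b] by blast
        then show ?thesis using L1[of p b] that by (simp add: S_def)
      qed
      then show ?thesis by (auto simp: Z_def)
    qed
    then have "Inf Z = \<infinity>" by (simp add: top_ereal_def)
    then show ?thesis using inf unfolding Z_def by simp
  qed
qed


end
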